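(* Let $d\le n$ be nonnegative integers and let $\mathcal P_d$ be the linear operator on functions $f:\{\pm1\}^n\to\mathbb R$ mapping $f=\sum_{\alpha\subseteq[n]}\hat f_\alpha\chi_\alpha$ to its low-degree part $\sum_{|\alpha|\le d}\hat f_\alpha\chi_\alpha$, where $\chi_\alpha(x)=\prod_{i\in\alpha}x_i$. Then $\textsf{Tensor-SDP}(\mathcal P_d)\le 9^d$.
   Context: A level-$r$ pseudo-expectation functional on polynomials in variables $y_1,\dots,y_N$ is a map $\tilde{\mathbb E}$ from real polynomials of degree at most $r$ to $\mathbb R$ that is linear, satisfies $\tilde{\mathbb E}[1]=1$, and satisfies $\tilde{\mathbb E}[P^2]\ge 0$ for every polynomial $P$ of degree at most $r/2$. For a linear operator $A$ from functions on a finite set $\mathcal U$ to functions on a finite set $\mathcal V$, $\textsf{Tensor-SDP}^{(r)}(A)$ is the maximum of $\tilde{\mathbb E}_f\|Af\|_4^4$ over level-$r$ pseudo-expectation functionals $\tilde{\mathbb E}$ on polynomials in the variables $\{f(u)\}_{u\in\mathcal U}$ satisfying $\tilde{\mathbb E}_f(\|f\|_2^2-1)^2=0$; here $\|g\|_p=(\mathbb E_{v}|g(v)|^p)^{1/p}$ is the expectation norm (uniform average), so $\|Af\|_4^4$ and $\|f\|_2^2$ are polynomials in the variables $f(u)$. $\textsf{Tensor-SDP}$ denotes $\textsf{Tensor-SDP}^{(4)}$. Expectations over $\{\pm1\}^n$ are with respect to the uniform distribution. *)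

theory Defs
  imports Complex_Main "HOL-Library.Multiset"
begin

text \<open>Real polynomials in variables indexed by elements of type 'u are represented by
  their coefficient functions on monomials (multisets of variables).\<close>

type_synonym 'u rpoly = "'u multiset \<Rightarrow> real"

definition monomials :: "'u set \<Rightarrow> nat \<Rightarrow> 'u multiset set" where
  "monomials U r = {m. set_mset m \<subseteq> U \<and> size m \<le> r}"

definition polys :: "'u set \<Rightarrow> nat \<Rightarrow> 'u rpoly set" where
  "polys U r = {P. \<forall>m. P m \<noteq> 0 \<longrightarrow> m \<in> monomials U r}"

definition pconst :: "real \<Rightarrow> 'u rpoly" where
  "pconst c = (\<lambda>m. if m = {#} then c else 0)"

definition pvar :: "'u \<Rightarrow> 'u rpoly" where
  "pvar u = (\<lambda>m. if m = {#u#} then 1 else 0)"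

definition padd :: "'u rpoly \<Rightarrow> 'u rpoly \<Rightarrow> 'u rpoly" where
  "padd P Q = (\<lambda>m. P m + Q m)"

definition psmult :: "real \<Rightarrow> 'u rpoly \<Rightarrow> 'u rpoly" where
  "psmult c P = (\<lambda>m. c * P m)"

definition pmult :: "'u rpoly \<Rightarrow> 'u rpoly \<Rightarrow> 'u rpoly" where
  "pmult P Q = (\<lambda>m. \<Sum>a\<in>{a. a \<subseteq># m}. P a * Q (m - a))"

definition ppow :: "'u rpoly \<Rightarrow> nat \<Rightarrow> 'u rpoly" where
  "ppow P k = (pmult P ^^ k) (pconst 1)"

definition psum :: "('i \<Rightarrow> 'u rpoly) \<Rightarrow> 'i set \<Rightarrow> 'u rpoly" where
  "psum F I = (\<lambda>m. \<Sum>i\<in>I. F i m)"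

definition is_pseudo_exp :: "'u set \<Rightarrow> nat \<Rightarrow> ('u rpoly \<Rightarrow> real) \<Rightarrow> bool" where
  "is_pseudo_exp U r E \<longleftrightarrow>
     (\<forall>P\<in>polys U r. \<forall>Q\<in>polys U r. E (padd P Q) = E P + E Q) \<and>
     (\<forall>c. \<forall>P\<in>polys U r. E (psmult c P) = c * E P) \<and>
     E (pconst 1) = 1 \<and>
     (\<forall>P\<in>polys U (r div 2). E (pmult P P) \<ge> 0)"

text \<open>For a linear operator A from functions on U to functions on V, the value (A f)(v)
  as a (linear) polynomial in the variables f(u), u in U.\<close>
definition op_poly :: "'u set \<Rightarrow> (('u \<Rightarrow> real) \<Rightarrow> ('v \<Rightarrow> real)) \<Rightarrow> 'v \<Rightarrow> 'u rpoly" where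
  "op_poly U A v = psum (\<lambda>u. psmult (A (\<lambda>w. if w = u then 1 else 0) v) (pvar u)) U"

definition norm4_4_poly :: "'u set \<Rightarrow> 'v set \<Rightarrow> (('u \<Rightarrow> real) \<Rightarrow> ('v \<Rightarrow> real)) \<Rightarrow> 'u rpoly" where
  "norm4_4_poly U V A = psmult (1 / real (card V)) (psum (\<lambda>v. ppow (op_poly U A v) 4) V)"

definition norm2_2_poly :: "'u set \<Rightarrow> 'u rpoly" where
  "norm2_2_poly U = psmult (1 / real (card U)) (psum (\<lambda>u. pmult (pvar u) (pvar u)) U)"

definition tensor_sdp_level ::
  "nat \<Rightarrow> 'u set \<Rightarrow> 'v set \<Rightarrow> (('u \<Rightarrow> real) \<Rightarrow> ('v \<Rightarrow> real)) \<Rightarrow> real" where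
  "tensor_sdp_level r U V A =
     Sup {E (norm4_4_poly U V A) | E. is_pseudo_exp U r E \<and>
            E (ppow (padd (norm2_2_poly U) (pconst (-1))) 2) = 0}"

definition tensor_sdp :: "'u set \<Rightarrow> 'v set \<Rightarrow> (('u \<Rightarrow> real) \<Rightarrow> ('v \<Rightarrow> real)) \<Rightarrow> real" where
  "tensor_sdp U V A = tensor_sdp_level 4 U V A"

definition cube :: "nat \<Rightarrow> (nat \<Rightarrow> real) set" where
  "cube n = {x. (\<forall>i<n. x i = 1 \<or> x i = -1) \<and> (\<forall>i\<ge>n. x i = 0)}"

definition chi :: "nat set \<Rightarrow> (nat \<Rightarrow> real) \<Rightarrow> real" where
  "chi \<alpha> x = (\<Prod>i\<in>\<alpha>. x i)"

definition fourier_coeff :: "nat \<Rightarrow> ((nat \<Rightarrow> real) \<Rightarrow> real) \<Rightarrow> nat set \<Rightarrow> real" where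
  "fourier_coeff n f \<alpha> = (\<Sum>x\<in>cube n. f x * chi \<alpha> x) / real (card (cube n))"

definition low_deg_proj :: "nat \<Rightarrow> nat \<Rightarrow> ((nat \<Rightarrow> real) \<Rightarrow> real) \<Rightarrow> ((nat \<Rightarrow> real) \<Rightarrow> real)" where
  "low_deg_proj n d f = (\<lambda>x. \<Sum>\<alpha>\<in>{\<alpha>. \<alpha> \<subseteq> {..<n} \<and> card \<alpha> \<le> d}. fourier_coeff n f \<alpha> * chi \<alpha> x)"

end

theory Submission
  imports Defs "HOL-Library.Poly_Mapping"
begin

type_synonym 'u R = "'u multiset \<Rightarrow>\<^sub>0 real"

lemma finite_monomials:
  assumes "finite U" shows "finite (monomials U r)"
proof -
  have "monomials U r = (\<Union>k\<in>{..r}. multisets_of_size U k)"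
    by (auto simp: monomials_def multisets_of_size_def)
  then show ?thesis using assms by auto
qed

lemma finite_submsets: "finite {a. a \<subseteq># (m::'a multiset)}"
proof -
  have "{a. a \<subseteq># m} \<subseteq> monomials (set_mset m) (size m)"
    by (auto simp: monomials_def size_mset_mono dest: mset_subset_eqD)
  then show ?thesis by (rule finite_subset) (simp add: finite_monomials)
qed

lemma lookup_times_pmult:
  fixes p q :: "'u R"
  shows "Poly_Mapping.lookup (p * q) = pmult (Poly_Mapping.lookup p) (Poly_Mapping.lookup q)"
proof
  fix m
  have inner: "Sum_any (\<lambda>r. Poly_Mapping.lookup q r when m = l + r) = (if l \<subseteq># m then Poly_Mapping.lookup q (m - l) else 0)" for l
  proof (cases "l \<subseteq># m")
    case True
    then obtain r0 where r0: "m = l + r0" by (metis subset_mset.add_diff_inverse)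
    have "Sum_any (\<lambda>r. Poly_Mapping.lookup q r when m = l + r) = Sum_any (\<lambda>r. Poly_Mapping.lookup q r when r0 = r)"
      by (rule Sum_any.cong) (auto simp: r0)
    then show ?thesis using True r0 by simp
  next
    case False
    have "(\<lambda>r. Poly_Mapping.lookup q r when m = l + r) = (\<lambda>r. 0)"
      using False by (auto simp: when_def fun_eq_iff)
    then show ?thesis using False by (metis Sum_any.neutral)
  qed
  have "Poly_Mapping.lookup (p * q) m = Sum_any (\<lambda>l. Poly_Mapping.lookup p l * (if l \<subseteq># m then Poly_Mapping.lookup q (m - l) else 0))"
    by (simp add: lookup_mult inner)
  also have "\<dots> = (\<Sum>l\<in>{a. a \<subseteq># m}. Poly_Mapping.lookup p l * (if l \<subseteq># m then Poly_Mapping.lookup q (m - l) else 0))"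
    by (rule Sum_any.expand_superset) (auto simp: finite_submsets)
  also have "\<dots> = pmult (Poly_Mapping.lookup p) (Poly_Mapping.lookup q) m"
    unfolding pmult_def by (rule sum.cong) auto
  finally show "Poly_Mapping.lookup (p * q) m = pmult (Poly_Mapping.lookup p) (Poly_Mapping.lookup q) m" .
qed

abbreviation lk :: "'u R \<Rightarrow> 'u rpoly" where "lk \<equiv> Poly_Mapping.lookup"

definition cst :: "real \<Rightarrow> 'u R" where "cst c = Poly_Mapping.single {#} c"
definition X :: "'u \<Rightarrow> 'u R" where "X u = Poly_Mapping.single {#u#} 1"
definition D :: "'u set \<Rightarrow> nat \<Rightarrow> 'u R set" where
  "D U r = {p. Poly_Mapping.keys p \<subseteq> monomials U r}"

lemma D_polys: "p \<in> D U r \<longleftrightarrow> lk p \<in> polys U r"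
  by (auto simp: D_def polys_def in_keys_iff)

lemma lk_add: "lk (p + q) = padd (lk p) (lk q)"
  by (simp add: padd_def fun_eq_iff lookup_add)

lemma lk_cst: "lk (cst c) = pconst c"
  by (auto simp: cst_def pconst_def fun_eq_iff lookup_single when_def)

lemma lk_one: "lk (1::'u R) = pconst 1"
  by (auto simp: pconst_def fun_eq_iff lookup_one when_def)

lemma lk_X: "lk (X u) = pvar u"
  by (auto simp: X_def pvar_def fun_eq_iff lookup_single when_def)

lemma lk_cst_mult: "lk (cst c * p) = psmult c (lk p)"
proof -
  have "pmult (pconst c) (lk p) m = c * lk p m" for m
  proof -
    have "pmult (pconst c) (lk p) m = (\<Sum>a\<in>{a. a \<subseteq># m}. if a = {#} then c * lk p m else 0)"
      unfolding pmult_def pconst_def by (rule sum.cong) auto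
    also have "\<dots> = c * lk p m"
      by (subst sum.delta) (auto simp: finite_submsets)
    finally show ?thesis .
  qed
  then show ?thesis by (simp add: lookup_times_pmult lk_cst psmult_def fun_eq_iff)
qed

lemma lk_sum: "lk (sum F I) = psum (\<lambda>i. lk (F i)) I"
  by (simp add: psum_def fun_eq_iff lookup_sum)

lemma lk_power: "lk (p ^ k) = ppow (lk p) k"
  by (induction k) (simp_all add: ppow_def lk_one lookup_times_pmult)

lemma cst_add: "cst (a + b) = cst a + cst b"
  by (simp add: cst_def single_add)
lemma cst_mult: "cst (a * b) = cst a * cst b"
  by (simp add: cst_def mult_single)
lemma cst_one: "cst 1 = 1"
  by (simp add: cst_def single_one)
lemma cst_zero: "cst 0 = 0"
  by (simp add: cst_def)
lemma cst_uminus: "cst (- a) = - cst a"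
  by (simp add: cst_def single_uminus)
lemma cst_diff: "cst (a - b) = cst a - cst b"
  by (simp add: cst_def single_diff)
lemma cst_sum: "cst (sum f I) = (\<Sum>i\<in>I. cst (f i))"
  by (induction I rule: infinite_finite_induct) (simp_all add: cst_zero cst_add)
lemma cst_of_nat: "of_nat k = cst (real k)"
  by (simp add: cst_def single_of_nat)
lemma cst_numeral: "cst (numeral k) = numeral k"
  using cst_of_nat[of "numeral k"] by simp
lemma cst_power: "cst (a ^ k) = cst a ^ k"
  by (induction k) (simp_all add: cst_one cst_mult)

lemma D_zero[simp]: "0 \<in> D U r" by (simp add: D_def)
lemma D_add: "p \<in> D U r \<Longrightarrow> q \<in> D U r \<Longrightarrow> p + q \<in> D U r"
  unfolding D_def using keys_add[of p q] by blast
lemma D_uminus: "p \<in> D U r \<Longrightarrow> - p \<in> D U r"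
  unfolding D_def by simp
lemma D_diff: "p \<in> D U r \<Longrightarrow> q \<in> D U r \<Longrightarrow> p - q \<in> D U r"
  using D_add[of p U r "- q"] D_uminus[of q U r] by simp

lemma D_mono: "p \<in> D U r \<Longrightarrow> r \<le> r' \<Longrightarrow> p \<in> D U r'"
  unfolding D_def monomials_def by auto
lemma D_mult: "p \<in> D U a \<Longrightarrow> q \<in> D U b \<Longrightarrow> p * q \<in> D U (a + b)"
proof -
  assume p: "p \<in> D U a" and q: "q \<in> D U b"
  show ?thesis unfolding D_def mem_Collect_eq
  proof
    fix m assume "m \<in> Poly_Mapping.keys (p * q)"
    then obtain x y where "m = x + y" "x \<in> Poly_Mapping.keys p" "y \<in> Poly_Mapping.keys q"
      using keys_mult[of p q] by blast
    moreover have "set_mset x \<subseteq> U" "size x \<le> a" using p \<open>x \<in> _\<close> unfolding D_def monomials_def by auto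
    moreover have "set_mset y \<subseteq> U" "size y \<le> b" using q \<open>y \<in> _\<close> unfolding D_def monomials_def by auto
    ultimately show "m \<in> monomials U (a + b)" unfolding monomials_def by simp
  qed
qed
lemma D1_mult: "x \<in> D U 1 \<Longrightarrow> y \<in> D U 1 \<Longrightarrow> x * y \<in> D U 2"
  using D_mult[of x U 1 y 1] by (simp add: numeral_2_eq_2)
lemma D1_D2: "x \<in> D U 1 \<Longrightarrow> x \<in> D U 2"
  using D_mono[of x U 1 2] by simp
lemma D2_mult: "x \<in> D U 2 \<Longrightarrow> y \<in> D U 2 \<Longrightarrow> x * y \<in> D U 4"
  using D_mult[of x U 2 y 2] by simp
lemma D_cst: "cst c \<in> D U r"
  unfolding D_def cst_def monomials_def by auto
lemma D_one: "1 \<in> D U r"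
  using D_cst[of 1 U r] by (simp add: cst_one)
lemma D_cst_mult: "p \<in> D U r \<Longrightarrow> cst c * p \<in> D U r"
  using D_mult[OF D_cst[of c U 0]] by simp
lemma D_X: "u \<in> U \<Longrightarrow> X u \<in> D U 1"
  unfolding D_def X_def monomials_def by auto
lemma D_sum: "(\<And>i. i \<in> I \<Longrightarrow> F i \<in> D U r) \<Longrightarrow> sum F I \<in> D U r"
proof (induction I rule: infinite_finite_induct)
  case (insert x F) then show ?case by (simp add: D_add)
qed simp_all

lemma cst_mult_D4_uminus: "- p = cst (-1) * (p::'u R)"
  by (simp add: cst_uminus cst_one)

locale pexp =
  fixes U :: "'u set" and E :: "'u rpoly \<Rightarrow> real"
  assumes pe: "is_pseudo_exp U 4 E"
begin

definition Eh :: "'u R \<Rightarrow> real" where "Eh p = E (lk p)"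

lemma Eh_add: "p \<in> D U 4 \<Longrightarrow> q \<in> D U 4 \<Longrightarrow> Eh (p + q) = Eh p + Eh q"
  using pe unfolding is_pseudo_exp_def Eh_def by (simp add: lk_add D_polys)

lemma Eh_cmult: "p \<in> D U 4 \<Longrightarrow> Eh (cst c * p) = c * Eh p"
  using pe unfolding is_pseudo_exp_def Eh_def by (simp add: lk_cst_mult D_polys)

lemma Eh_one: "Eh 1 = 1"
  using pe unfolding is_pseudo_exp_def Eh_def by (simp add: lk_one)

lemma Eh_sq: "s \<in> D U 2 \<Longrightarrow> Eh (s * s) \<ge> 0"
  using pe unfolding is_pseudo_exp_def Eh_def by (simp add: lookup_times_pmult D_polys)

lemma Eh_zero: "Eh 0 = 0"
  using Eh_add[of 0 0] by simp

lemma Eh_uminus: "p \<in> D U 4 \<Longrightarrow> Eh (- p) = - Eh p"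
  using Eh_cmult[of p "-1"] by (simp add: cst_uminus cst_one)

lemma Eh_diff: "p \<in> D U 4 \<Longrightarrow> q \<in> D U 4 \<Longrightarrow> Eh (p - q) = Eh p - Eh q"
  using Eh_add[of p "- q"] Eh_uminus[of q] D_uminus[of q U 4] by simp

lemma Eh_sum: "(\<And>i. i \<in> I \<Longrightarrow> F i \<in> D U 4) \<Longrightarrow> Eh (sum F I) = (\<Sum>i\<in>I. Eh (F i))"
proof (induction I rule: infinite_finite_induct)
  case (insert x F)
  then show ?case by (simp add: Eh_add D_sum)
qed (simp_all add: Eh_zero)

end

inductive_set sosc :: "'u set \<Rightarrow> 'u R set" for U where
  sq: "s \<in> D U 2 \<Longrightarrow> s * s \<in> sosc U"
| zero: "0 \<in> sosc U"
| add: "a \<in> sosc U \<Longrightarrow> b \<in> sosc U \<Longrightarrow> a + b \<in> sosc U"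
| scal: "a \<in> sosc U \<Longrightarrow> c \<ge> 0 \<Longrightarrow> cst c * a \<in> sosc U"

lemma sosc_D4: "a \<in> sosc U \<Longrightarrow> a \<in> D U 4"
proof (induction rule: sosc.induct)
  case (sq s) then show ?case using D_mult[of s U 2 s 2] by simp
qed (auto intro: D_add D_cst_mult)

lemma (in pexp) Eh_sosc: "a \<in> sosc U \<Longrightarrow> Eh a \<ge> 0"
proof (induction rule: sosc.induct)
  case (sq s) then show ?case by (rule Eh_sq)
next
  case zero then show ?case by (simp add: Eh_zero)
next
  case (add a b) then show ?case by (simp add: Eh_add sosc_D4)
next
  case (scal a c) then show ?case by (simp add: Eh_cmult sosc_D4)
qed

lemma sosc_sum: "(\<And>i. i \<in> I \<Longrightarrow> F i \<in> sosc U) \<Longrightarrow> sum F I \<in> sosc U"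
proof (induction I rule: infinite_finite_induct)
  case (insert x F)
  then show ?case by (simp add: sosc.add)
qed (simp_all add: sosc.zero)

lemma sosc_of_nat: "a \<in> sosc U \<Longrightarrow> of_nat k * a \<in> sosc U"
  by (simp add: cst_of_nat sosc.scal)

lemma sosc_sq1: "x \<in> D U 1 \<Longrightarrow> c \<ge> 0 \<Longrightarrow> cst c * (x * x) \<in> sosc U"
proof -
  assume "x \<in> D U 1" "c \<ge> 0"
  then show ?thesis by (intro sosc.scal sosc.sq D1_D2)
qed

lemma wsum_sosc:
  assumes "\<And>i. i \<in> I \<Longrightarrow> x i \<in> D U 1" "\<And>i. i \<in> I \<Longrightarrow> c i \<ge> 0"
  shows "(\<Sum>i\<in>I. cst (c i) * (x i * x i)) \<in> sosc U"
  using assms by (intro sosc_sum sosc_sq1) auto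

lemma wsum_prod_sosc:
  assumes "\<And>i. i \<in> I \<Longrightarrow> x i \<in> D U 1" "\<And>i. i \<in> I \<Longrightarrow> c i \<ge> 0"
    "\<And>j. j \<in> J \<Longrightarrow> y j \<in> D U 1" "\<And>j. j \<in> J \<Longrightarrow> c' j \<ge> 0"
  shows "(\<Sum>i\<in>I. cst (c i) * (x i * x i)) * (\<Sum>j\<in>J. cst (c' j) * (y j * y j)) \<in> sosc U"
proof -
  have "(\<Sum>i\<in>I. cst (c i) * (x i * x i)) * (\<Sum>j\<in>J. cst (c' j) * (y j * y j))
      = (\<Sum>j\<in>J. \<Sum>i\<in>I. cst (c i * c' j) * ((x i * y j) * (x i * y j)))"
    by (simp add: sum_distrib_left sum_distrib_right cst_mult algebra_simps)
  also have "\<dots> \<in> sosc U"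
    using assms by (intro sosc_sum sosc.scal sosc.sq) (auto intro: D1_mult)
  finally show ?thesis .
qed


lemma cube_Suc: "cube (Suc n) = (\<lambda>v. v(n := 1)) ` cube n \<union> (\<lambda>v. v(n := -1)) ` cube n"
proof (intro equalityI subsetI)
  fix w assume w: "w \<in> cube (Suc n)"
  let ?v = "w(n := 0)"
  have v: "?v \<in> cube n" using w by (auto simp: cube_def)
  have "w n = 1 \<or> w n = -1" using w by (auto simp: cube_def)
  then show "w \<in> (\<lambda>v. v(n := 1)) ` cube n \<union> (\<lambda>v. v(n := -1)) ` cube n"
  proof
    assume "w n = 1" then have "w = ?v(n := 1)" by auto
    then show ?thesis using v by blast
  next
    assume "w n = -1" then have "w = ?v(n := -1)" by auto
    then show ?thesis using v by blast
  qed
next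
  fix w assume "w \<in> (\<lambda>v. v(n := 1)) ` cube n \<union> (\<lambda>v. v(n := -1)) ` cube n"
  then show "w \<in> cube (Suc n)" by (auto simp: cube_def less_Suc_eq)
qed

lemma cube_zero_outside: "v \<in> cube n \<Longrightarrow> i \<ge> n \<Longrightarrow> v i = 0"
  by (auto simp: cube_def)

lemma inj_upd: "inj_on (\<lambda>v. v(n := s)) (cube n)"
proof (rule inj_onI)
  fix v w assume "v \<in> cube n" "w \<in> cube n" "v(n := s) = w(n := s)"
  then show "v = w" by (metis cube_zero_outside fun_upd_idem_iff fun_upd_upd order_refl)
qed

lemma cube0: "cube 0 = {\<lambda>_. 0}" by (auto simp: cube_def)

lemma finite_cube: "finite (cube n)"
  by (induction n) (simp_all add: cube0 cube_Suc)

lemma disj_upd: "(\<lambda>v. v(n := 1)) ` cube n \<inter> (\<lambda>v. v(n := -1)) ` cube n = {}"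
  by (auto simp: fun_eq_iff) (metis fun_upd_same one_neq_neg_one)

lemma sum_cube_Suc:
  "(\<Sum>w\<in>cube (Suc n). F w) = (\<Sum>v\<in>cube n. F (v(n := 1)) + F (v(n := -1)))"
proof -
  have "(\<Sum>w\<in>cube (Suc n). F w) = (\<Sum>w\<in>(\<lambda>v. v(n := 1)) ` cube n. F w) + (\<Sum>w\<in>(\<lambda>v. v(n := -1)) ` cube n. F w)"
    unfolding cube_Suc by (rule sum.union_disjoint) (auto simp: finite_cube disj_upd)
  also have "\<dots> = (\<Sum>v\<in>cube n. F (v(n := 1))) + (\<Sum>v\<in>cube n. F (v(n := -1)))"
    by (simp add: sum.reindex inj_upd)
  finally show ?thesis by (simp add: sum.distrib)
qed

lemma card_cube: "card (cube n) = 2 ^ n"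
proof (induction n)
  case 0
  have "cube 0 = {\<lambda>_. 0}" by (auto simp: cube_def)
  then show ?case by simp
next
  case (Suc n)
  have "card (cube (Suc n)) = card ((\<lambda>v. v(n := 1)) ` cube n) + card ((\<lambda>v. v(n := -1)) ` cube n)"
    unfolding cube_Suc by (rule card_Un_disjoint) (auto simp: finite_cube disj_upd)
  then show ?case using Suc by (simp add: card_image inj_upd)
qed


lemma chi_upd: "\<alpha> \<subseteq> {..<n} \<Longrightarrow> chi \<alpha> (v(n := s)) = chi \<alpha> v"
  unfolding chi_def by (rule prod.cong) auto

lemma chi_insert: "\<alpha> \<subseteq> {..<n} \<Longrightarrow> chi (insert n \<alpha>) v = v n * chi \<alpha> v"
  unfolding chi_def by (subst prod.insert) (auto intro: finite_subset)

lemma chi_empty: "chi {} v = 1" by (simp add: chi_def)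

lemma Pow_lessThan_Suc: "Pow {..<Suc n} = Pow {..<n} \<union> insert n ` Pow {..<n}"
  by (simp add: lessThan_Suc Pow_insert)

lemma sum_Pow_Suc:
  "(\<Sum>\<alpha>\<in>Pow {..<Suc n}. F \<alpha>) = (\<Sum>\<alpha>\<in>Pow {..<n}. F \<alpha>) + (\<Sum>\<alpha>\<in>Pow {..<n}. F (insert n \<alpha>))"
proof -
  have inj: "inj_on (insert n) (Pow {..<n})"
    by (rule inj_onI) (metis Pow_iff insert_ident lessThan_iff order_less_irrefl subset_iff)
  have "(\<Sum>\<alpha>\<in>Pow {..<Suc n}. F \<alpha>) = (\<Sum>\<alpha>\<in>Pow {..<n}. F \<alpha>) + (\<Sum>\<alpha>\<in>insert n ` Pow {..<n}. F \<alpha>)"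
    unfolding Pow_lessThan_Suc by (rule sum.union_disjoint) auto
  then show ?thesis by (simp add: sum.reindex inj)
qed


definition Pn :: "nat \<Rightarrow> (nat set \<Rightarrow> 'u R) \<Rightarrow> (nat \<Rightarrow> real) \<Rightarrow> 'u R" where
  "Pn n l v = (\<Sum>\<alpha>\<in>Pow {..<n}. cst (chi \<alpha> v) * l \<alpha>)"

definition Wn :: "nat \<Rightarrow> (nat set \<Rightarrow> 'u R) \<Rightarrow> 'u R" where
  "Wn n l = (\<Sum>\<alpha>\<in>Pow {..<n}. cst (3 ^ card \<alpha>) * (l \<alpha> * l \<alpha>))"

definition Qn :: "nat \<Rightarrow> (nat set \<Rightarrow> 'u R) \<Rightarrow> (nat set \<Rightarrow> 'u R) \<Rightarrow> 'u R" where
  "Qn n l m = (\<Sum>v\<in>cube n. (Pn n l v * Pn n l v) * (Pn n m v * Pn n m v))"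

lemma Pn_Suc: "Pn (Suc n) l (v(n := s)) = Pn n l v + cst s * Pn n (\<lambda>\<alpha>. l (insert n \<alpha>)) v"
proof -
  have "Pn (Suc n) l (v(n := s)) = (\<Sum>\<alpha>\<in>Pow {..<n}. cst (chi \<alpha> v) * l \<alpha>)
      + (\<Sum>\<alpha>\<in>Pow {..<n}. cst s * (cst (chi \<alpha> v) * l (insert n \<alpha>)))"
    unfolding Pn_def sum_Pow_Suc
    by (intro arg_cong2[where f="(+)"] sum.cong)
       (auto simp: chi_upd chi_insert cst_mult mult.assoc)
  then show ?thesis by (simp add: Pn_def sum_distrib_left)
qed

lemma Wn_Suc: "Wn (Suc n) l = Wn n l + 3 * Wn n (\<lambda>\<alpha>. l (insert n \<alpha>))"
proof -
  have "Wn (Suc n) l = Wn n l + (\<Sum>\<alpha>\<in>Pow {..<n}. 3 * (cst (3 ^ card \<alpha>) * (l (insert n \<alpha>) * l (insert n \<alpha>))))"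
    unfolding Wn_def sum_Pow_Suc
  proof (intro arg_cong2[where f="(+)"] refl sum.cong)
    fix \<alpha> assume "\<alpha> \<in> Pow {..<n}"
    then have "card (insert n \<alpha>) = Suc (card \<alpha>)"
      by (subst card_insert_disjoint) (auto intro: finite_subset)
    then show "cst (3 ^ card (insert n \<alpha>)) * (l (insert n \<alpha>) * l (insert n \<alpha>)) =
        3 * (cst (3 ^ card \<alpha>) * (l (insert n \<alpha>) * l (insert n \<alpha>)))"
      by (simp add: cst_mult mult.assoc cst_numeral)
  qed
  then show ?thesis by (simp add: Wn_def sum_distrib_left)
qed

lemma Pn_D: "(\<And>\<alpha>. l \<alpha> \<in> D U 1) \<Longrightarrow> Pn n l v \<in> D U 1"
  unfolding Pn_def by (intro D_sum D_cst_mult) auto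

lemma Wn_D: "(\<And>\<alpha>. l \<alpha> \<in> D U 1) \<Longrightarrow> Wn n l \<in> sosc U"
  unfolding Wn_def by (rule wsum_sosc) auto

lemma sosc_numeral: "a \<in> sosc U \<Longrightarrow> numeral k * a \<in> sosc U"
  using sosc_of_nat[of a U "numeral k"] by simp

lemma pointwise:
  fixes a b c e :: "'u R"
  shows "((a + cst 1 * b) * (a + cst 1 * b)) * ((c + cst 1 * e) * (c + cst 1 * e))
       + ((a + cst (-1) * b) * (a + cst (-1) * b)) * ((c + cst (-1) * e) * (c + cst (-1) * e))
     = 2 * ((a * a) * (c * c)) + 2 * ((b * b) * (e * e)) + 6 * ((a * a) * (e * e)) + 6 * ((b * b) * (c * c))
       - 4 * ((a * e - b * c) * (a * e - b * c))"
  by (simp add: cst_one cst_uminus algebra_simps)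

lemma Qn_Suc:
  "Qn (Suc n) l m = 2 * Qn n l m + 2 * Qn n (\<lambda>\<alpha>. l (insert n \<alpha>)) (\<lambda>\<alpha>. m (insert n \<alpha>))
     + 6 * Qn n l (\<lambda>\<alpha>. m (insert n \<alpha>)) + 6 * Qn n (\<lambda>\<alpha>. l (insert n \<alpha>)) m
     - 4 * (\<Sum>v\<in>cube n. (Pn n l v * Pn n (\<lambda>\<alpha>. m (insert n \<alpha>)) v - Pn n (\<lambda>\<alpha>. l (insert n \<alpha>)) v * Pn n m v)
              * (Pn n l v * Pn n (\<lambda>\<alpha>. m (insert n \<alpha>)) v - Pn n (\<lambda>\<alpha>. l (insert n \<alpha>)) v * Pn n m v))"
proof -
  let ?l1 = "\<lambda>\<alpha>. l (insert n \<alpha>)" and ?m1 = "\<lambda>\<alpha>. m (insert n \<alpha>)"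
  have "Qn (Suc n) l m = (\<Sum>v\<in>cube n.
       2 * ((Pn n l v * Pn n l v) * (Pn n m v * Pn n m v)) + 2 * ((Pn n ?l1 v * Pn n ?l1 v) * (Pn n ?m1 v * Pn n ?m1 v))
     + 6 * ((Pn n l v * Pn n l v) * (Pn n ?m1 v * Pn n ?m1 v)) + 6 * ((Pn n ?l1 v * Pn n ?l1 v) * (Pn n m v * Pn n m v))
     - 4 * ((Pn n l v * Pn n ?m1 v - Pn n ?l1 v * Pn n m v) * (Pn n l v * Pn n ?m1 v - Pn n ?l1 v * Pn n m v)))"
    unfolding Qn_def sum_cube_Suc Pn_Suc by (rule sum.cong) (simp_all only: pointwise)
  then show ?thesis unfolding Qn_def by (simp add: sum.distrib sum_subtractf sum_distrib_left)
qed

lemma main_ineq: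
  "(\<And>\<alpha>. l \<alpha> \<in> D U 1) \<Longrightarrow> (\<And>\<alpha>. m \<alpha> \<in> D U 1) \<Longrightarrow>
   of_nat (2 ^ n) * (Wn n l * Wn n m) - Qn n l m \<in> sosc U"
proof (induction n arbitrary: l m)
  case 0
  have "Qn 0 l m = of_nat (2 ^ 0) * (Wn 0 l * Wn 0 m)"
    by (simp add: Qn_def Wn_def Pn_def cube0 chi_empty cst_one)
  then show ?case by (simp add: sosc.zero)
next
  case (Suc n)
  let ?l1 = "\<lambda>\<alpha>. l (insert n \<alpha>)" and ?m1 = "\<lambda>\<alpha>. m (insert n \<alpha>)"
  let ?K = "of_nat (2 ^ n) :: 'a R"
  let ?S = "(\<Sum>v\<in>cube n. (Pn n l v * Pn n ?m1 v - Pn n ?l1 v * Pn n m v)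
              * (Pn n l v * Pn n ?m1 v - Pn n ?l1 v * Pn n m v))"
  have l1: "\<And>\<alpha>. ?l1 \<alpha> \<in> D U 1" and m1: "\<And>\<alpha>. ?m1 \<alpha> \<in> D U 1" using Suc.prems by auto
  have i1: "?K * (Wn n l * Wn n m) - Qn n l m \<in> sosc U" using Suc.IH[of l m] Suc.prems by auto
  have i2: "?K * (Wn n ?l1 * Wn n ?m1) - Qn n ?l1 ?m1 \<in> sosc U" using Suc.IH[of ?l1 ?m1] l1 m1 by auto
  have i3: "?K * (Wn n l * Wn n ?m1) - Qn n l ?m1 \<in> sosc U" using Suc.IH[of l ?m1] Suc.prems m1 by auto
  have i4: "?K * (Wn n ?l1 * Wn n m) - Qn n ?l1 m \<in> sosc U" using Suc.IH[of ?l1 m] Suc.prems l1 by auto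
  have w: "Wn n ?l1 * Wn n ?m1 \<in> sosc U"
    unfolding Wn_def by (rule wsum_prod_sosc) (use l1 m1 in auto)
  have s: "?S \<in> sosc U"
    by (intro sosc_sum sosc.sq D_diff D1_mult Pn_D Suc.prems l1 m1)
  have eq: "of_nat (2 ^ Suc n) * (Wn (Suc n) l * Wn (Suc n) m) - Qn (Suc n) l m
     = 2 * (?K * (Wn n l * Wn n m) - Qn n l m) + 2 * (?K * (Wn n ?l1 * Wn n ?m1) - Qn n ?l1 ?m1)
       + 6 * (?K * (Wn n l * Wn n ?m1) - Qn n l ?m1) + 6 * (?K * (Wn n ?l1 * Wn n m) - Qn n ?l1 m)
       + 16 * (?K * (Wn n ?l1 * Wn n ?m1)) + 4 * ?S"
    unfolding Wn_Suc Qn_Suc by (simp add: algebra_simps)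
  show ?case unfolding eq
    by (intro sosc.add sosc_numeral i1 i2 i3 i4 s sosc_of_nat w)
qed


definition ev :: "'u R \<Rightarrow> real" where "ev p = (\<Sum>k\<in>Poly_Mapping.keys p. lk p k)"

lemma ev_superset: "finite S \<Longrightarrow> Poly_Mapping.keys p \<subseteq> S \<Longrightarrow> ev p = sum (lk p) S"
  unfolding ev_def by (rule sum.mono_neutral_left) (auto simp: in_keys_iff)

lemma ev_add: "ev (p + q) = ev p + ev q"
proof -
  let ?S = "Poly_Mapping.keys p \<union> Poly_Mapping.keys q"
  have "ev (p + q) = sum (lk (p + q)) ?S" by (rule ev_superset) (auto dest: keys_add[THEN subsetD])
  also have "\<dots> = sum (lk p) ?S + sum (lk q) ?S" by (simp add: lookup_add sum.distrib)
  also have "\<dots> = ev p + ev q" using ev_superset[of ?S p] ev_superset[of ?S q] by simp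
  finally show ?thesis .
qed

lemma ev_zero: "ev 0 = 0" by (simp add: ev_def)

lemma ev_sum: "ev (sum F I) = (\<Sum>i\<in>I. ev (F i))"
  by (induction I rule: infinite_finite_induct) (simp_all add: ev_zero ev_add)

lemma ev_single: "ev (Poly_Mapping.single a c) = c"
  by (cases "c = 0") (simp_all add: ev_def)

lemma pm_expand: "p = (\<Sum>a\<in>Poly_Mapping.keys p. Poly_Mapping.single a (lk p a))"
proof (rule poly_mapping_eqI)
  fix k
  show "lk p k = lk (\<Sum>a\<in>Poly_Mapping.keys p. Poly_Mapping.single a (lk p a)) k"
    by (auto simp: lookup_sum lookup_single when_def in_keys_iff)
qed

lemma ev_mult: "ev (p * q) = ev p * ev q"
proof -
  have "p * q = (\<Sum>b\<in>Poly_Mapping.keys q. \<Sum>a\<in>Poly_Mapping.keys p.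
      Poly_Mapping.single (a + b) (lk p a * lk q b))"
    by (subst pm_expand[of p], subst pm_expand[of q])
       (simp add: sum_distrib_left sum_distrib_right mult_single)
  then have "ev (p * q) = (\<Sum>b\<in>Poly_Mapping.keys q. \<Sum>a\<in>Poly_Mapping.keys p. lk p a * lk q b)"
    by (simp add: ev_sum ev_single)
  also have "\<dots> = (\<Sum>a\<in>Poly_Mapping.keys p. \<Sum>b\<in>Poly_Mapping.keys q. lk p a * lk q b)"
    by (rule sum.swap)
  finally show ?thesis by (simp add: ev_def sum_product)
qed

lemma ev_cst: "ev (cst c) = c" by (simp add: cst_def ev_single)
lemma ev_X: "ev (X u) = 1" by (simp add: X_def ev_single)
lemma ev_one: "ev 1 = 1" using ev_cst[of 1] by (simp add: cst_one)

definition E0 :: "'u set \<Rightarrow> 'u rpoly \<Rightarrow> real" where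
  "E0 U P = (\<Sum>m\<in>monomials U 4. P m)"

lemma E0_ev: "finite U \<Longrightarrow> p \<in> D U 4 \<Longrightarrow> E0 U (lk p) = ev p"
  using ev_superset[of "monomials U 4" p] finite_monomials[of U 4] by (simp add: E0_def D_def)

lemma E0_pe: fixes U :: "'u set" assumes "finite U" shows "is_pseudo_exp U 4 (E0 U)"
  unfolding is_pseudo_exp_def
proof (intro conjI ballI allI)
  fix P Q :: "'u rpoly"
  show "E0 U (padd P Q) = E0 U P + E0 U Q" by (simp add: E0_def padd_def sum.distrib)
next
  fix c and P :: "'u rpoly"
  show "E0 U (psmult c P) = c * E0 U P" by (simp add: E0_def psmult_def sum_distrib_left)
next
  show "E0 U (pconst 1) = 1"
  proof -
    have "E0 U (pconst 1) = (\<Sum>m\<in>monomials U 4. if m = {#} then 1 else 0)"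
      by (simp add: E0_def pconst_def)
    also have "\<dots> = 1" using assms finite_monomials[of U 4] by (subst sum.delta) (auto simp: monomials_def)
    finally show ?thesis .
  qed
next
  fix P :: "'u rpoly" assume P: "P \<in> polys U (4 div 2)"
  have fin: "finite {m. P m \<noteq> 0}"
    using P assms by (auto simp: polys_def intro: finite_subset[OF _ finite_monomials])
  define p where "p = Abs_poly_mapping P"
  have lp: "lk p = P" using fin by (simp add: p_def)
  have "p \<in> D U 2" using P by (simp add: D_polys lp)
  then have pp: "p * p \<in> D U 4" by (intro D2_mult)
  have "E0 U (pmult P P) = E0 U (lk (p * p))" by (simp add: lookup_times_pmult lp)
  also have "\<dots> = ev p * ev p" using assms pp by (simp add: E0_ev ev_mult)
  finally show "E0 U (pmult P P) \<ge> 0" by simp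
qed


definition fh :: "nat \<Rightarrow> nat set \<Rightarrow> (nat \<Rightarrow> real) R" where
  "fh n \<alpha> = cst (1 / 2 ^ n) * (\<Sum>u\<in>cube n. cst (chi \<alpha> u) * X u)"

definition lowf :: "nat \<Rightarrow> nat \<Rightarrow> nat set \<Rightarrow> (nat \<Rightarrow> real) R" where
  "lowf n d \<alpha> = (if card \<alpha> \<le> d then fh n \<alpha> else 0)"

definition Nn :: "nat \<Rightarrow> (nat \<Rightarrow> real) R" where
  "Nn n = cst (1 / 2 ^ n) * (\<Sum>u\<in>cube n. X u * X u)"

lemma fh_D: "fh n \<alpha> \<in> D (cube n) 1"
  unfolding fh_def by (intro D_cst_mult D_sum D_X) auto

lemma lowf_D: "lowf n d \<alpha> \<in> D (cube n) 1"
  unfolding lowf_def using fh_D by auto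

lemma Nn_D: "Nn n \<in> D (cube n) 2"
  unfolding Nn_def by (intro D_cst_mult D_sum D1_mult D_X) auto

lemma norm2_Nn: "norm2_2_poly (cube n) = lk (Nn n)"
  unfolding Nn_def lk_cst_mult by (simp add: norm2_2_poly_def lk_sum lookup_times_pmult lk_X card_cube)

lemma fourier_ind: "u \<in> cube n \<Longrightarrow>
   fourier_coeff n (\<lambda>w. if w = u then 1 else 0) \<alpha> = chi \<alpha> u / 2 ^ n"
  unfolding fourier_coeff_def card_cube
  by (simp add: if_distrib[of "\<lambda>x. x * _"] finite_cube cong: if_cong)

lemma low_set: "{\<alpha>. \<alpha> \<subseteq> {..<n} \<and> card \<alpha> \<le> d} = {\<alpha>\<in>Pow {..<n}. card \<alpha> \<le> d}"
  by auto

lemma Pn_lowf: "Pn n (lowf n d) v =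
   (\<Sum>u\<in>cube n. cst (\<Sum>\<alpha>\<in>{\<alpha>. \<alpha> \<subseteq> {..<n} \<and> card \<alpha> \<le> d}. chi \<alpha> u * chi \<alpha> v * (1 / 2 ^ n)) * X u)"
proof -
  have "Pn n (lowf n d) v = (\<Sum>\<alpha>\<in>{\<alpha>. \<alpha> \<subseteq> {..<n} \<and> card \<alpha> \<le> d}. cst (chi \<alpha> v) * fh n \<alpha>)"
  proof -
    have "Pn n (lowf n d) v = (\<Sum>\<alpha>\<in>Pow {..<n}. if card \<alpha> \<le> d then cst (chi \<alpha> v) * fh n \<alpha> else 0)"
      unfolding Pn_def lowf_def by (rule sum.cong) auto
    also have "\<dots> = (\<Sum>\<alpha>\<in>{\<alpha>\<in>Pow {..<n}. card \<alpha> \<le> d}. cst (chi \<alpha> v) * fh n \<alpha>)"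
      by (rule sum.inter_filter[symmetric]) simp
    finally show ?thesis unfolding low_set .
  qed
  also have "\<dots> = (\<Sum>\<alpha>\<in>{\<alpha>. \<alpha> \<subseteq> {..<n} \<and> card \<alpha> \<le> d}. \<Sum>u\<in>cube n. cst (chi \<alpha> u * chi \<alpha> v * (1 / 2 ^ n)) * X u)"
    unfolding fh_def by (simp only: sum_distrib_left cst_mult mult_ac)
  also have "\<dots> = (\<Sum>u\<in>cube n. \<Sum>\<alpha>\<in>{\<alpha>. \<alpha> \<subseteq> {..<n} \<and> card \<alpha> \<le> d}. cst (chi \<alpha> u * chi \<alpha> v * (1 / 2 ^ n)) * X u)"
    by (rule sum.swap)
  also have "\<dots> = (\<Sum>u\<in>cube n. cst (\<Sum>\<alpha>\<in>{\<alpha>. \<alpha> \<subseteq> {..<n} \<and> card \<alpha> \<le> d}. chi \<alpha> u * chi \<alpha> v * (1 / 2 ^ n)) * X u)"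
    by (simp only: cst_sum sum_distrib_right)
  finally show ?thesis .
qed

lemma op_poly_Pn: "op_poly (cube n) (low_deg_proj n d) v = lk (Pn n (lowf n d) v)"
proof -
  have "op_poly (cube n) (low_deg_proj n d) v =
     lk (\<Sum>u\<in>cube n. cst (low_deg_proj n d (\<lambda>w. if w = u then 1 else 0) v) * X u)"
    by (simp add: op_poly_def lk_sum lk_cst_mult lk_X)
  also have "\<dots> = lk (Pn n (lowf n d) v)"
  proof -
    have "low_deg_proj n d (\<lambda>w. if w = u then 1 else 0) v =
       (\<Sum>\<alpha>\<in>{\<alpha>. \<alpha> \<subseteq> {..<n} \<and> card \<alpha> \<le> d}. chi \<alpha> u * chi \<alpha> v * (1 / 2 ^ n))"
      if "u \<in> cube n" for u
      unfolding low_deg_proj_def by (rule sum.cong) (simp_all add: fourier_ind that)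
    then show ?thesis unfolding Pn_lowf by (intro arg_cong[where f=lk] sum.cong) auto
  qed
  finally show ?thesis .
qed

lemma norm4_Qn: "norm4_4_poly (cube n) (cube n) (low_deg_proj n d) =
   lk (cst (1 / 2 ^ n) * Qn n (lowf n d) (lowf n d))"
proof -
  have "norm4_4_poly (cube n) (cube n) (low_deg_proj n d) =
     lk (cst (1 / 2 ^ n) * (\<Sum>v\<in>cube n. Pn n (lowf n d) v ^ 4))"
    by (simp add: norm4_4_poly_def lk_cst_mult lk_sum lk_power op_poly_Pn card_cube)
  also have "(\<Sum>v\<in>cube n. Pn n (lowf n d) v ^ 4) = Qn n (lowf n d) (lowf n d)"
    unfolding Qn_def by (rule sum.cong) (simp_all add: power4_eq_xxxx mult.assoc)
  finally show ?thesis .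
qed


lemma chi_orth:
  assumes u: "u \<in> cube n" and w: "w \<in> cube n"
  shows "(\<Sum>\<alpha>\<in>Pow {..<n}. chi \<alpha> u * chi \<alpha> w) = (if u = w then 2 ^ n else 0)"
proof -
  have "(\<Sum>\<alpha>\<in>Pow {..<n}. chi \<alpha> u * chi \<alpha> w) = (\<Sum>\<alpha>\<in>Pow {..<n}. (\<Prod>i\<in>\<alpha>. u i * w i) * (\<Prod>i\<in>{..<n} - \<alpha>. 1))"
    unfolding chi_def by (simp add: prod.distrib)
  also have "\<dots> = (\<Prod>i\<in>{..<n}. u i * w i + 1)"
    by (rule prod_add[symmetric]) simp
  also have "\<dots> = (if u = w then 2 ^ n else 0)"
  proof (cases "u = w")
    case True
    have "(\<Prod>i\<in>{..<n}. u i * w i + 1) = (\<Prod>i\<in>{..<n}. 2)"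
      by (rule prod.cong) (use u True in \<open>auto simp: cube_def\<close>)
    then show ?thesis using True by simp
  next
    case False
    then obtain i where "u i \<noteq> w i" by auto
    moreover have "i < n"
      using \<open>u i \<noteq> w i\<close> u w by (metis cube_zero_outside not_le)
    moreover have "u i = 1 \<or> u i = -1" "w i = 1 \<or> w i = -1"
      using u w \<open>i < n\<close> by (auto simp: cube_def)
    ultimately have "u i * w i + 1 = 0" by auto
    then have "(\<Prod>i\<in>{..<n}. u i * w i + 1) = 0" using \<open>i < n\<close>
      by (intro prod_zero) auto
    then show ?thesis using False by simp
  qed
  finally show ?thesis .
qed

lemma parseval: "Nn n = (\<Sum>\<alpha>\<in>Pow {..<n}. fh n \<alpha> * fh n \<alpha>)"
proof -
  let ?c = "cst (1 / 2 ^ n) :: (nat \<Rightarrow> real) R"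
  have "(\<Sum>\<alpha>\<in>Pow {..<n}. fh n \<alpha> * fh n \<alpha>)
      = (\<Sum>\<alpha>\<in>Pow {..<n}. ?c * ?c * (\<Sum>u\<in>cube n. \<Sum>w\<in>cube n. cst (chi \<alpha> u * chi \<alpha> w) * (X u * X w)))"
    unfolding fh_def by (simp only: sum_product cst_mult mult_ac)
  also have "\<dots> = ?c * ?c * (\<Sum>u\<in>cube n. \<Sum>w\<in>cube n. \<Sum>\<alpha>\<in>Pow {..<n}. cst (chi \<alpha> u * chi \<alpha> w) * (X u * X w))"
    by (simp only: sum_distrib_left[symmetric] sum.swap[of _ "Pow {..<n}"])
  also have "\<dots> = ?c * ?c * (\<Sum>u\<in>cube n. \<Sum>w\<in>cube n. cst (\<Sum>\<alpha>\<in>Pow {..<n}. chi \<alpha> u * chi \<alpha> w) * (X u * X w))"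
    by (simp only: cst_sum sum_distrib_right)
  also have "\<dots> = ?c * ?c * (\<Sum>u\<in>cube n. \<Sum>w\<in>cube n. if u = w then cst (2 ^ n) * (X u * X w) else 0)"
    by (intro arg_cong2[where f="(*)"] refl sum.cong) (simp_all add: chi_orth cst_zero)
  also have "\<dots> = ?c * ?c * (\<Sum>u\<in>cube n. cst (2 ^ n) * (X u * X u))"
    by (simp add: finite_cube)
  also have "\<dots> = ?c * (?c * cst (2 ^ n)) * (\<Sum>u\<in>cube n. X u * X u)"
    by (simp add: sum_distrib_left mult_ac)
  also have "?c * cst (2 ^ n) = 1"
    by (simp add: cst_mult[symmetric] cst_one)
  finally show ?thesis by (simp add: Nn_def)
qed


lemma (in pexp) Eh_cs:
  assumes Z: "Z \<in> D U 2" and W: "W \<in> D U 2" and z0: "Eh (Z * Z) = 0"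
  shows "Eh (Z * W) = 0"
proof -
  define a where "a = Eh (Z * W)"
  define b where "b = Eh (W * W)"
  have b0: "b \<ge> 0" unfolding b_def using W by (rule Eh_sq)
  have ineq: "0 \<le> 2 * t * a + t * t * b" for t
  proof -
    have ZtW: "Z + cst t * W \<in> D U 2" using Z W by (intro D_add D_cst_mult)
    have eq: "(Z + cst t * W) * (Z + cst t * W) = Z * Z + (cst (2 * t) * (Z * W) + cst (t * t) * (W * W))"
      by (simp add: cst_mult cst_numeral algebra_simps)
    have m1: "Z * Z \<in> D U 4" "Z * W \<in> D U 4" "W * W \<in> D U 4" using Z W by (auto intro: D2_mult)
    have "0 \<le> Eh ((Z + cst t * W) * (Z + cst t * W))" using ZtW by (rule Eh_sq)
    also have "\<dots> = 2 * t * a + t * t * b"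
      unfolding eq using m1 z0
      by (simp add: Eh_add Eh_cmult D_add D_cst_mult a_def b_def)
    finally show ?thesis .
  qed
  define s where "s = b + 1"
  have s0: "s > 0" using b0 by (simp add: s_def)
  define t where "t = - a / s"
  have st: "s * t = - a" using s0 by (simp add: t_def)
  have "0 \<le> (s * s) * (2 * t * a + t * t * b)"
    using ineq[of t] s0 by simp
  also have "(s * s) * (2 * t * a + t * t * b) = 2 * (s * t) * a * s + (s * t) * (s * t) * b"
    by (simp add: algebra_simps)
  also have "\<dots> = - (a * a) * (b + 2)"
    by (simp only: st) (simp add: s_def algebra_simps)
  finally have "a * a * (b + 2) \<le> 0" by simp
  moreover have "b + 2 > 0" using b0 by simp
  ultimately have "a * a \<le> 0" by (simp add: mult_le_0_iff)
  then have "a = 0" by (auto simp: mult_le_0_iff)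
  then show ?thesis unfolding a_def .
qed

lemma sos_bound:
  "cst (9 ^ d) * (Nn n * Nn n) - cst (1 / 2 ^ n) * Qn n (lowf n d) (lowf n d) \<in> sosc (cube n)"
proof -
  let ?L = "lowf n d" and ?P = "Pow {..<n}"
  have A: "of_nat (2 ^ n) * (Wn n ?L * Wn n ?L) - Qn n ?L ?L \<in> sosc (cube n)"
    by (rule main_ineq) (rule lowf_D)+
  define wt where "wt \<alpha> = (if card \<alpha> \<le> d then 3 ^ card \<alpha> else 0 :: real)" for \<alpha> :: "nat set"
  have W: "Wn n ?L = (\<Sum>\<alpha>\<in>?P. cst (wt \<alpha>) * (fh n \<alpha> * fh n \<alpha>))"
    unfolding Wn_def lowf_def wt_def by (rule sum.cong) (auto simp: cst_zero)
  have m: "cst (3 ^ d) * Nn n - Wn n ?L = (\<Sum>\<alpha>\<in>?P. cst (3 ^ d - wt \<alpha>) * (fh n \<alpha> * fh n \<alpha>))"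
    unfolding W parseval sum_distrib_left sum_subtractf[symmetric]
    by (rule sum.cong) (simp_all add: cst_diff algebra_simps)
  have p: "cst (3 ^ d) * Nn n + Wn n ?L = (\<Sum>\<alpha>\<in>?P. cst (3 ^ d + wt \<alpha>) * (fh n \<alpha> * fh n \<alpha>))"
    unfolding W parseval sum_distrib_left sum.distrib[symmetric]
    by (rule sum.cong) (simp_all add: cst_add algebra_simps)
  have nn: "3 ^ d - wt \<alpha> \<ge> 0" for \<alpha>
    unfolding wt_def by (auto intro: power_increasing)
  have nn2: "3 ^ d + wt \<alpha> \<ge> 0" for \<alpha>
    unfolding wt_def by auto
  have B: "(cst (3 ^ d) * Nn n - Wn n ?L) * (cst (3 ^ d) * Nn n + Wn n ?L) \<in> sosc (cube n)"
    unfolding m p by (rule wsum_prod_sosc) (rule fh_D | rule nn | rule nn2)+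
  have c1: "cst (1 / 2 ^ n) * of_nat (2 ^ n) = (1 :: (nat \<Rightarrow> real) R)"
    by (simp add: cst_of_nat cst_mult[symmetric] cst_one)
  have c9: "cst (9 ^ d) = cst (3 ^ d) * (cst (3 ^ d) :: (nat \<Rightarrow> real) R)"
    by (simp add: cst_mult[symmetric] power_mult_distrib[symmetric])
  have "cst (1 / 2 ^ n) * (of_nat (2 ^ n) * (Wn n ?L * Wn n ?L) - Qn n ?L ?L)
      = (cst (1 / 2 ^ n) * of_nat (2 ^ n)) * (Wn n ?L * Wn n ?L) - cst (1 / 2 ^ n) * Qn n ?L ?L"
    by (simp add: right_diff_distrib mult.assoc)
  also have "\<dots> = Wn n ?L * Wn n ?L - cst (1 / 2 ^ n) * Qn n ?L ?L" by (simp only: c1 mult_1)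
  finally have eq1: "cst (1 / 2 ^ n) * (of_nat (2 ^ n) * (Wn n ?L * Wn n ?L) - Qn n ?L ?L)
      = Wn n ?L * Wn n ?L - cst (1 / 2 ^ n) * Qn n ?L ?L" .
  have "cst (9 ^ d) * (Nn n * Nn n) - cst (1 / 2 ^ n) * Qn n ?L ?L =
      (cst (3 ^ d) * Nn n - Wn n ?L) * (cst (3 ^ d) * Nn n + Wn n ?L)
      + cst (1 / 2 ^ n) * (of_nat (2 ^ n) * (Wn n ?L * Wn n ?L) - Qn n ?L ?L)"
    unfolding eq1 c9 by (simp add: algebra_simps)
  also have "\<dots> \<in> sosc (cube n)"
    by (intro sosc.add B sosc.scal A) simp
  finally show ?thesis .
qed

lemma Qn_D: "Qn n (lowf n d) (lowf n d) \<in> D (cube n) 4"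
  unfolding Qn_def by (intro D_sum D2_mult D1_mult Pn_D lowf_D)

lemma ppow_Z: "ppow (padd (norm2_2_poly (cube n)) (pconst (-1))) 2 = lk ((Nn n + cst (-1)) * (Nn n + cst (-1)))"
proof -
  have "ppow (padd (norm2_2_poly (cube n)) (pconst (-1))) 2 = ppow (lk (Nn n + cst (-1))) 2"
    by (simp add: lk_add lk_cst norm2_Nn)
  also have "\<dots> = lk ((Nn n + cst (-1)) ^ 2)" by (rule lk_power[symmetric])
  finally show ?thesis by (simp add: power2_eq_square)
qed

lemma bound:
  assumes pe: "is_pseudo_exp (cube n) 4 E"
    and c: "E (ppow (padd (norm2_2_poly (cube n)) (pconst (-1))) 2) = 0"
  shows "E (norm4_4_poly (cube n) (cube n) (low_deg_proj n d)) \<le> 9 ^ d"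
proof -
  interpret pexp "cube n" E by (rule pexp.intro) (rule pe)
  let ?N = "Nn n" let ?Z = "Nn n + cst (-1)"
  have ZD: "?Z \<in> D (cube n) 2" by (intro D_add Nn_D D_cst)
  have z0: "Eh (?Z * ?Z) = 0" using c by (simp add: ppow_Z Eh_def)
  have "Eh (?Z * (?N + 1)) = 0" by (rule Eh_cs[OF ZD _ z0]) (intro D_add Nn_D D_one)
  moreover have "?Z * (?N + 1) = ?N * ?N - 1" by (simp add: cst_uminus cst_one algebra_simps)
  moreover have NN: "?N * ?N \<in> D (cube n) 4" by (intro D2_mult Nn_D)
  ultimately have "Eh (?N * ?N) - Eh 1 = 0" by (simp add: Eh_diff D_one)
  then have NN1: "Eh (?N * ?N) = 1" by (simp add: Eh_one)
  let ?G = "cst (1 / 2 ^ n) * Qn n (lowf n d) (lowf n d)"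
  have GD: "?G \<in> D (cube n) 4" by (intro D_cst_mult Qn_D)
  have "0 \<le> Eh (cst (9 ^ d) * (?N * ?N) - ?G)" by (rule Eh_sosc[OF sos_bound])
  also have "\<dots> = 9 ^ d - Eh ?G" using NN GD NN1 by (simp add: Eh_diff Eh_cmult D_cst_mult)
  finally have "Eh ?G \<le> 9 ^ d" by simp
  then show ?thesis by (simp add: norm4_Qn Eh_def)
qed

lemma witness:
  "E0 (cube n) (ppow (padd (norm2_2_poly (cube n)) (pconst (-1))) 2) = 0"
proof -
  let ?Z = "Nn n + cst (-1)"
  have ZD: "?Z * ?Z \<in> D (cube n) 4" by (intro D2_mult D_add Nn_D D_cst)
  have "ev (Nn n) = 1"
    by (simp add: Nn_def ev_mult ev_cst ev_sum ev_X card_cube)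
  then have "ev ?Z = 0" by (simp add: ev_add ev_cst)
  then show ?thesis using ZD by (simp add: ppow_Z E0_ev finite_cube ev_mult)
qed

theorem theorem2p2:
  fixes n d :: nat
  assumes "d \<le> n"
  shows "tensor_sdp (cube n) (cube n) (low_deg_proj n d) \<le> 9 ^ d"
  unfolding tensor_sdp_def tensor_sdp_level_def
proof (rule cSup_least)
  show "{E (norm4_4_poly (cube n) (cube n) (low_deg_proj n d)) |E.
          is_pseudo_exp (cube n) 4 E \<and> E (ppow (padd (norm2_2_poly (cube n)) (pconst (- 1))) 2) = 0} \<noteq> {}"
    using E0_pe[OF finite_cube[of n]] witness[of n] by blast
next
  fix x assume "x \<in> {E (norm4_4_poly (cube n) (cube n) (low_deg_proj n d)) |E.
          is_pseudo_exp (cube n) 4 E \<and> E (ppow (padd (norm2_2_poly (cube n)) (pconst (- 1))) 2) = 0}"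
  then show "x \<le> 9 ^ d" using bound by blast
qed

end
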